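(* Let $P$ be a finite poset and $\gamma\in\mathcal{U}_P^*$ with $\gamma\in(I^P_{\mathrm{comm}})^\perp$. Then $F_\gamma(\mathbf{x})$ is symmetric in $x_1,x_2,\dots$.
   Context: $\mathcal{U}_P=\mathbb{Z}\langle u_a:a\in P\rangle$ (noncommuting variables); $\mathcal{U}_P^*$ is the free $\mathbb{Z}$-module on words in the alphabet $P$, paired with $\mathcal{U}_P$ by $\langle \mathbf{u}_w, v\rangle=\delta_{vw}$ where $\mathbf{u}_w=u_{w_1}\cdots u_{w_n}$; for an ideal $I$, $I^\perp=\{\gamma:\langle z,\gamma\rangle=0\ \forall z\in I\}$. Write $a<_Pb$ for strict order. For $S\subseteq P$, $e^P_k(\mathbf{u}_S)=\sum u_{a_1}\cdots u_{a_k}$ over $a_1>_P\cdots>_Pa_k$ in $S$ ($e^P_0=1$, $e^P_k=0$ for $k<0$). $I^P_{\mathrm{comm}}$ is the ideal generated by $e^P_k(\mathbf{u}_S)e^P_\ell(\mathbf{u}_S)-e^P_\ell(\mathbf{u}_S)e^P_k(\mathbf{u}_S)$ over all $k,\ell$ and $S\subseteq P$. For a word $w$, $\mathrm{Des}_P(w)=\{i:w_{i+1}<_Pw_i\}$; $Q_D(\mathbf{x})=\sum x_{i_1}\cdots x_{i_n}$ over $i_1\le\cdots\le i_n$ with $i_j<i_{j+1}$ for $j\in D$. For $\gamma=\sum_w\gamma_w w$, $F_\gamma(\mathbf{x})=\sum_w\gamma_wQ_{\mathrm{Des}_P(w)}(\mathbf{x})$. *)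

theory Defs
  imports Main
begin

text \<open>The finite poset P is modelled as a type of class finite and order.
  Elements of U_P (noncommutative polynomials over Z in variables u_a, a in P) and of
  the dual U_P^* are both represented as integer-valued functions on words
  (coefficient functions), with finite support where required.\<close>

type_synonym 'a ncpoly = "'a list \<Rightarrow> int"

definition ncfinite :: "'a ncpoly \<Rightarrow> bool" where
  "ncfinite p \<longleftrightarrow> finite {w. p w \<noteq> 0}"

definition ncmult :: "'a ncpoly \<Rightarrow> 'a ncpoly \<Rightarrow> 'a ncpoly" where
  "ncmult p q = (\<lambda>w. \<Sum>i\<le>length w. p (take i w) * q (drop i w))"

definition elemP :: "nat \<Rightarrow> ('a::order) set \<Rightarrow> 'a ncpoly" where
  "elemP k S = (\<lambda>w. if length w = k \<and> set w \<subseteq> S \<and> sorted_wrt (\<lambda>x y. y < x) w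
                   then 1 else 0)"

definition comm_gens :: "('a::{finite,order}) ncpoly set" where
  "comm_gens = {(\<lambda>w. ncmult (elemP k S) (elemP l S) w - ncmult (elemP l S) (elemP k S) w)
                 | k l S. True}"

inductive_set ncideal :: "'a ncpoly set \<Rightarrow> 'a ncpoly set" for G where
  zero: "(\<lambda>w. 0) \<in> ncideal G"
| gen: "g \<in> G \<Longrightarrow> g \<in> ncideal G"
| add: "p \<in> ncideal G \<Longrightarrow> q \<in> ncideal G \<Longrightarrow> (\<lambda>w. p w + q w) \<in> ncideal G"
| lmult: "p \<in> ncideal G \<Longrightarrow> ncfinite r \<Longrightarrow> ncmult r p \<in> ncideal G"
| rmult: "p \<in> ncideal G \<Longrightarrow> ncfinite r \<Longrightarrow> ncmult p r \<in> ncideal G"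

definition pairing :: "'a ncpoly \<Rightarrow> 'a ncpoly \<Rightarrow> int" where
  "pairing z \<gamma> = (\<Sum>w\<in>{w. \<gamma> w \<noteq> 0}. z w * \<gamma> w)"

definition ncperp :: "'a ncpoly set \<Rightarrow> 'a ncpoly set" where
  "ncperp I = {\<gamma>. ncfinite \<gamma> \<and> (\<forall>z\<in>I. pairing z \<gamma> = 0)}"

text \<open>P-descent set, 1-indexed: i in Des iff w_{i+1} <_P w_i.\<close>
definition DesP :: "('a::order) list \<Rightarrow> nat set" where
  "DesP w = {i. 1 \<le> i \<and> i < length w \<and> w ! i < w ! (i - 1)}"

text \<open>Coefficient of the monomial x^alpha in Q_D(x) (homogeneous of degree n).
  Variables x_1, x_2, ... are indexed by 0, 1, ... (x_{j+1} has index j);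
  alpha j is the exponent of x_{j+1}. A term of Q_D corresponds to a sequence
  i_1 <= ... <= i_n with strict steps at D.\<close>
definition Qcoeff :: "nat set \<Rightarrow> nat \<Rightarrow> (nat \<Rightarrow> nat) \<Rightarrow> nat" where
  "Qcoeff D n \<alpha> = card {s :: nat list. length s = n
      \<and> (\<forall>j. 1 \<le> j \<and> j < n \<longrightarrow> s ! (j - 1) \<le> s ! j)
      \<and> (\<forall>j\<in>D. s ! (j - 1) < s ! j)
      \<and> (\<forall>i. count_list s i = \<alpha> i)}"

definition Fcoeff :: "('a::order) ncpoly \<Rightarrow> (nat \<Rightarrow> nat) \<Rightarrow> int" where
  "Fcoeff \<gamma> \<alpha> = (\<Sum>w\<in>{w. \<gamma> w \<noteq> 0}. \<gamma> w * int (Qcoeff (DesP w) (length w) \<alpha>))"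

definition symmetric_series :: "((nat \<Rightarrow> nat) \<Rightarrow> int) \<Rightarrow> bool" where
  "symmetric_series c \<longleftrightarrow> (\<forall>\<sigma> \<alpha>. bij \<sigma> \<longrightarrow> c (\<alpha> \<circ> \<sigma>) = c \<alpha>)"

end

theory Submission
  imports Defs "HOL-Library.Multiset"
begin


definition cst :: "int \<Rightarrow> 'a ncpoly" where "cst c = (\<lambda>w. if w = [] then c else 0)"

lemma ncmult_cst_left: "ncmult (cst c) p w = c * p w"
  unfolding ncmult_def cst_def
  by (cases w) (simp_all add: sum.atMost_Suc_shift del: sum.atMost_Suc)

lemma ncmult_cst_right: "ncmult p (cst c) w = p w * c"
proof -
  have "ncmult p (cst c) w = (\<Sum>i\<in>insert (length w) {..<length w}. p (take i w) * cst c (drop i w))"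
    unfolding ncmult_def by (simp add: lessThan_Suc_atMost[symmetric])
  also have "\<dots> = p w * c" by (simp add: cst_def)
  finally show ?thesis .
qed

lemma ncmult_homog_left:
  assumes "\<And>u. p u \<noteq> 0 \<Longrightarrow> length u = a"
  shows "ncmult p q w = (if a \<le> length w then p (take a w) * q (drop a w) else 0)"
proof -
  have "ncmult p q w = (\<Sum>i\<in>{..length w}. if i = a then p (take a w) * q (drop a w) else 0)"
    unfolding ncmult_def
  proof (rule sum.cong)
    fix i assume "i \<in> {..length w}"
    then have "length (take i w) = i" by simp
    then show "p (take i w) * q (drop i w) = (if i = a then p (take a w) * q (drop a w) else 0)"
    proof (cases "i = a")
      case False
      then have "p (take i w) = 0" using assms[of "take i w"] \<open>length (take i w) = i\<close> by fastforce
      then show ?thesis using False by simp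
    qed simp
  qed simp
  also have "\<dots> = (if a \<le> length w then p (take a w) * q (drop a w) else 0)"
    by (simp add: sum.delta)
  finally show ?thesis .
qed

lemma sum_swap_tri:
  fixes g :: "nat \<Rightarrow> nat \<Rightarrow> int"
  shows "(\<Sum>i\<le>n. \<Sum>j\<le>i. g j i) = (\<Sum>j\<le>n. \<Sum>k\<le>n - j. g j (j + k))"
proof -
  have "(\<Sum>i\<le>n. \<Sum>j\<le>i. g j i) = (\<Sum>i\<le>n. \<Sum>j\<le>i. g j (j + (i - j)))"
    by (intro sum.cong) auto
  also have "\<dots> = (\<Sum>(j,k)\<in>{(j,k). j+k \<le> n}. g j (j + k))"
    by (rule sum.triangle_reindex_eq[symmetric])
  also have "{(j,k). j+k \<le> n} = Sigma {..n} (\<lambda>j. {..n - j})" by auto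
  also have "(\<Sum>(j,k)\<in>Sigma {..n} (\<lambda>j. {..n - j}). g j (j + k)) = (\<Sum>j\<le>n. \<Sum>k\<le>n - j. g j (j + k))"
    by (rule sum.Sigma[symmetric]) auto
  finally show ?thesis .
qed

lemma ncmult_assoc: "ncmult (ncmult p q) r = ncmult p (ncmult q r)"
proof
  fix w :: "'a list"
  let ?n = "length w"
  have "ncmult (ncmult p q) r w = (\<Sum>i\<le>?n. \<Sum>j\<le>i. p (take j w) * q (take (i - j) (drop j w)) * r (drop i w))"
    unfolding ncmult_def
    by (intro sum.cong refl) (auto simp: sum_distrib_right min_def drop_take)
  also have "\<dots> = (\<Sum>j\<le>?n. \<Sum>k\<le>?n - j. p (take j w) * q (take k (drop j w)) * r (drop (j + k) w))"
    by (rule sum_swap_tri[where g = "\<lambda>j i. p (take j w) * q (take (i - j) (drop j w)) * r (drop i w)", simplified])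
  also have "\<dots> = ncmult p (ncmult q r) w"
    unfolding ncmult_def
    by (intro sum.cong refl) (auto simp: sum_distrib_left mult.assoc add.commute)
  finally show "ncmult (ncmult p q) r w = ncmult p (ncmult q r) w" .
qed

lemma ncmult_diff_right: "ncmult p (\<lambda>w. q w - r w) = (\<lambda>w. ncmult p q w - ncmult p r w)"
  unfolding ncmult_def by (simp add: right_diff_distrib sum_subtractf)

lemma ncmult_diff_left: "ncmult (\<lambda>w. q w - r w) p = (\<lambda>w. ncmult q p w - ncmult r p w)"
  unfolding ncmult_def by (simp add: left_diff_distrib sum_subtractf)

lemma ncmult_sum_right: "ncmult p (\<lambda>w. \<Sum>j\<in>A. f j w) = (\<lambda>w. \<Sum>j\<in>A. ncmult p (f j) w)"
  unfolding ncmult_def by (simp add: sum_distrib_left sum.swap[of _ A])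

lemma ncmult_sum_left: "ncmult (\<lambda>w. \<Sum>j\<in>A. f j w) p = (\<lambda>w. \<Sum>j\<in>A. ncmult (f j) p w)"
  unfolding ncmult_def by (simp add: sum_distrib_right sum.swap[of _ A])

lemma ncmult_scale_left: "ncmult (\<lambda>w. c * q w) p = (\<lambda>w. c * ncmult q p w)"
  unfolding ncmult_def by (simp add: sum_distrib_left mult.assoc)



abbreviation JJ :: "('a::{finite,order}) ncpoly set" where "JJ \<equiv> ncideal comm_gens"

lemma ncfinite_cst: "ncfinite (cst c)"
proof -
  have "{w. cst c w \<noteq> 0} \<subseteq> {[]}" by (auto simp: cst_def split: if_splits)
  then show ?thesis unfolding ncfinite_def using finite_subset by blast
qed

lemma ncfinite_bnd:
  fixes p :: "('a::finite) ncpoly"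
  shows "ncfinite p \<longleftrightarrow> (\<exists>N. \<forall>w. p w \<noteq> 0 \<longrightarrow> length w \<le> N)"
proof
  assume "ncfinite p"
  then have f: "finite {w. p w \<noteq> 0}" by (simp add: ncfinite_def)
  show "\<exists>N. \<forall>w. p w \<noteq> 0 \<longrightarrow> length w \<le> N"
  proof (intro exI allI impI)
    fix w assume "p w \<noteq> 0"
    then show "length w \<le> Max (length ` {w. p w \<noteq> 0})"
      using f by (intro Max_ge) auto
  qed
next
  assume "\<exists>N. \<forall>w. p w \<noteq> 0 \<longrightarrow> length w \<le> N"
  then obtain N where N: "\<And>w. p w \<noteq> 0 \<Longrightarrow> length w \<le> N" by blast
  have "{w. p w \<noteq> 0} \<subseteq> {xs. set xs \<subseteq> UNIV \<and> length xs \<le> N}" using N by auto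
  moreover have "finite {xs. set xs \<subseteq> (UNIV::'a set) \<and> length xs \<le> N}"
    by (rule finite_lists_length_le) simp
  ultimately show "ncfinite p" unfolding ncfinite_def using finite_subset by blast
qed

lemma ncmult_nonzero:
  assumes "ncmult p q w \<noteq> 0"
  obtains i where "i \<le> length w" "p (take i w) \<noteq> 0" "q (drop i w) \<noteq> 0"
proof -
  from assms obtain i where "i \<in> {..length w}" "p (take i w) * q (drop i w) \<noteq> 0"
    unfolding ncmult_def by (meson sum.not_neutral_contains_not_neutral)
  then show ?thesis using that by auto
qed

lemma ncfinite_mult:
  fixes p :: "('a::finite) ncpoly"
  assumes "ncfinite p" "ncfinite q"
  shows "ncfinite (ncmult p q)"
proof -
  obtain N1 where N1: "\<And>w. p w \<noteq> 0 \<Longrightarrow> length w \<le> N1" using assms(1) ncfinite_bnd by blast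
  obtain N2 where N2: "\<And>w. q w \<noteq> 0 \<Longrightarrow> length w \<le> N2" using assms(2) ncfinite_bnd by blast
  have "length w \<le> N1 + N2" if nz: "ncmult p q w \<noteq> 0" for w
  proof -
    obtain i where i: "i \<le> length w" "p (take i w) \<noteq> 0" "q (drop i w) \<noteq> 0"
      using ncmult_nonzero[OF nz] by blast
    have "length w = length (take i w) + length (drop i w)" using i(1) by simp
    then show ?thesis using N1[OF i(2)] N2[OF i(3)] by linarith
  qed
  then show ?thesis using ncfinite_bnd by blast
qed

lemma J_neg: "p \<in> ncideal G \<Longrightarrow> (\<lambda>w. - p w) \<in> ncideal G"
proof -
  assume "p \<in> ncideal G"
  then have "ncmult (cst (-1)) p \<in> ncideal G" by (rule ncideal.lmult) (rule ncfinite_cst)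
  moreover have "ncmult (cst (-1)) p = (\<lambda>w. - p w)" by (rule ext) (simp add: ncmult_cst_left)
  ultimately show ?thesis by simp
qed

lemma J_scale: "p \<in> ncideal G \<Longrightarrow> (\<lambda>w. c * p w) \<in> ncideal G"
proof -
  assume "p \<in> ncideal G"
  then have "ncmult (cst c) p \<in> ncideal G" by (rule ncideal.lmult) (rule ncfinite_cst)
  moreover have "ncmult (cst c) p = (\<lambda>w. c * p w)" by (rule ext) (simp add: ncmult_cst_left)
  ultimately show ?thesis by simp
qed

lemma J_diff: "p \<in> ncideal G \<Longrightarrow> q \<in> ncideal G \<Longrightarrow> (\<lambda>w. p w - q w) \<in> ncideal G"
  using ncideal.add[OF _ J_neg, of p G q] by simp

lemma J_sum: "finite A \<Longrightarrow> (\<And>j. j \<in> A \<Longrightarrow> f j \<in> ncideal G) \<Longrightarrow> (\<lambda>w. \<Sum>j\<in>A. f j w) \<in> ncideal G"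
proof (induction A rule: finite_induct)
  case empty then show ?case by (simp add: ncideal.zero)
next
  case (insert x F)
  then show ?case using ncideal.add[of "f x" G "\<lambda>w. \<Sum>j\<in>F. f j w"] by simp
qed

definition ceq :: "('a::{finite,order}) ncpoly \<Rightarrow> 'a ncpoly \<Rightarrow> bool" where
  "ceq p q \<longleftrightarrow> (\<lambda>w. p w - q w) \<in> JJ"

lemma ceq_refl: "ceq p p"
  unfolding ceq_def using ncideal.zero by simp

lemma ceq_sym: "ceq p q \<Longrightarrow> ceq q p"
  unfolding ceq_def by (drule J_neg) simp

lemma ceq_trans: "ceq p q \<Longrightarrow> ceq q r \<Longrightarrow> ceq p r"
  unfolding ceq_def by (drule (1) ncideal.add) simp

lemma ceq_lmult: "ceq p q \<Longrightarrow> ncfinite r \<Longrightarrow> ceq (ncmult r p) (ncmult r q)"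
  unfolding ceq_def by (drule (1) ncideal.lmult) (simp add: ncmult_diff_right)

lemma ceq_rmult: "ceq p q \<Longrightarrow> ncfinite r \<Longrightarrow> ceq (ncmult p r) (ncmult q r)"
  unfolding ceq_def by (drule (1) ncideal.rmult) (simp add: ncmult_diff_left)

lemma pairing_diff: "pairing (\<lambda>w. p w - q w) \<gamma> = pairing p \<gamma> - pairing q \<gamma>"
  unfolding pairing_def by (simp add: left_diff_distrib sum_subtractf)

lemma ceq_pairing: "ceq p q \<Longrightarrow> \<gamma> \<in> ncperp JJ \<Longrightarrow> pairing p \<gamma> = pairing q \<gamma>"
  unfolding ceq_def ncperp_def using pairing_diff[of p q \<gamma>] by auto



definition ee :: "nat \<Rightarrow> ('a::order) ncpoly" where "ee k = elemP k UNIV"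
definition hh :: "nat \<Rightarrow> ('a::order) ncpoly" where
  "hh n = (\<lambda>w. of_bool (length w = n \<and> DesP w = {}))"

lemma ee_val: "ee k w = of_bool (length w = k \<and> sorted_wrt (\<lambda>x y. y < x) w)"
  by (simp add: ee_def elemP_def)

lemma DesP_empty_iff: "DesP w = {} \<longleftrightarrow> (\<forall>i. Suc i < length w \<longrightarrow> \<not> w ! Suc i < w ! i)"
  unfolding DesP_def
proof safe
  fix i assume "{i. 1 \<le> i \<and> i < length w \<and> w ! i < w ! (i - 1)} = {}" "Suc i < length w" "w ! Suc i < w ! i"
  then show False by (metis (mono_tags, lifting) Suc_eq_plus1 diff_Suc_1 empty_Collect_eq le_add2)
next
  fix x assume "\<forall>i. Suc i < length w \<longrightarrow> \<not> w ! Suc i < w ! i" "1 \<le> x" "x < length w" "w ! x < w ! (x - 1)"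
  then show "x \<in> {}" by (metis Suc_pred' less_eq_Suc_le One_nat_def)
qed

lemma all_nat_split: "(\<forall>i::nat. P i) \<longleftrightarrow> P 0 \<and> (\<forall>i. P (Suc i))"
  by (metis not0_implies_Suc)

lemma DesP_Nil[simp]: "DesP [] = {}" by (simp add: DesP_def)
lemma DesP_single[simp]: "DesP [x] = {}" by (simp add: DesP_def)
lemma DesP_Cons2: "DesP (x # y # u) = {} \<longleftrightarrow> \<not> y < x \<and> DesP (y # u) = {}"
  unfolding DesP_empty_iff by (subst all_nat_split) auto

lemma dec_Cons2: "sorted_wrt (\<lambda>x y. y < x) (x # y # u) \<longleftrightarrow> y < (x::'a::order) \<and> sorted_wrt (\<lambda>x y. y < x) (y # u)"
  by (rule sorted_wrt2) (auto simp: transp_def)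

lemma rec_comb:
  fixes w :: "('a::order) list"
  shows "w \<noteq> [] \<Longrightarrow> of_bool (DesP w = {}) =
    (\<Sum>k<length w. (-1::int)^k * of_bool (sorted_wrt (\<lambda>x y. y < x) (take (Suc k) w) \<and> DesP (drop (Suc k) w) = {}))"
proof (induction w)
  case Nil then show ?case by simp
next
  case (Cons x v)
  show ?case
  proof (cases v)
    case Nil then show ?thesis by simp
  next
    case (Cons y u)
    let ?t = "\<lambda>k. (-1::int)^k * of_bool (sorted_wrt (\<lambda>x y. y < x) (take (Suc k) v) \<and> DesP (drop (Suc k) v) = {})"
    have IH: "of_bool (DesP v = {}) = (\<Sum>k<length v. ?t k)" using Cons.IH Cons by simp
    have "(\<Sum>k<length (x # v). (-1::int)^k * of_bool (sorted_wrt (\<lambda>x y. y < x) (take (Suc k) (x # v)) \<and> DesP (drop (Suc k) (x # v)) = {}))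
        = of_bool (DesP v = {}) + (\<Sum>k<length v. (-1::int)^(Suc k) * of_bool (sorted_wrt (\<lambda>x y. y < x) (take (Suc (Suc k)) (x # v)) \<and> DesP (drop (Suc (Suc k)) (x # v)) = {}))"
      by (simp add: sum.lessThan_Suc_shift del: sum.lessThan_Suc)
    also have "(\<Sum>k<length v. (-1::int)^(Suc k) * of_bool (sorted_wrt (\<lambda>x y. y < x) (take (Suc (Suc k)) (x # v)) \<and> DesP (drop (Suc (Suc k)) (x # v)) = {}))
        = (\<Sum>k<length v. - (of_bool (y < x) * ?t k))"
      by (intro sum.cong refl) (simp add: Cons dec_Cons2 del: sorted_wrt.simps)
    also have "\<dots> = - (of_bool (y < x) * of_bool (DesP v = {}))"
      by (simp add: IH sum_negf sum_distrib_left)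
    finally show ?thesis using Cons by (simp add: DesP_Cons2)
  qed
qed

lemma hh_rec:
  assumes "n \<ge> 1"
  shows "hh n = (\<lambda>w. \<Sum>k<n. (-1)^k * ncmult (ee (Suc k)) (hh (n - Suc k)) w)"
proof
  fix w :: "'a list"
  have hom: "\<And>u. ee (Suc k) u \<noteq> 0 \<Longrightarrow> length u = Suc k" for k by (simp add: ee_val)
  have m: "ncmult (ee (Suc k)) (hh (n - Suc k)) w =
     (if Suc k \<le> length w then ee (Suc k) (take (Suc k) w) * hh (n - Suc k) (drop (Suc k) w) else 0)" for k
    by (rule ncmult_homog_left) (rule hom)
  show "hh n w = (\<Sum>k<n. (-1)^k * ncmult (ee (Suc k)) (hh (n - Suc k)) w)"
  proof (cases "length w = n")
    case True
    then have "w \<noteq> []" using assms by auto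
    have "(-1)^k * ncmult (ee (Suc k)) (hh (n - Suc k)) w = (-1::int)^k * of_bool (sorted_wrt (\<lambda>x y. y < x) (take (Suc k) w) \<and> DesP (drop (Suc k) w) = {})" if "k < n" for k
      using True that by (simp only: m) (simp add: hh_def ee_val)
    then have "(\<Sum>k<n. (-1)^k * ncmult (ee (Suc k)) (hh (n - Suc k)) w) = (\<Sum>k<n. (-1::int)^k * of_bool (sorted_wrt (\<lambda>x y. y < x) (take (Suc k) w) \<and> DesP (drop (Suc k) w) = {}))"
      by (intro sum.cong) auto
    with rec_comb[OF \<open>w \<noteq> []\<close>] True show ?thesis
      by (simp add: hh_def)
  next
    case False
    have "ncmult (ee (Suc k)) (hh (n - Suc k)) w = 0" if "k < n" for k
      using False that by (simp only: m) (auto simp: hh_def)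
    then show ?thesis using False by (simp add: hh_def)
  qed
qed

lemma hh0: "hh 0 = cst 1"
  by (rule ext) (simp add: hh_def cst_def)

lemma ncfinite_ee: "ncfinite (ee k :: ('a::{finite,order}) ncpoly)"
  unfolding ncfinite_bnd by (rule exI[of _ k]) (simp add: ee_val)

lemma ncfinite_hh: "ncfinite (hh k :: ('a::{finite,order}) ncpoly)"
  unfolding ncfinite_bnd by (rule exI[of _ k]) (simp add: hh_def)

lemma ncmult_lin_right: "ncmult r (\<lambda>w. \<Sum>j\<in>A. c j * f j w) = (\<lambda>w. \<Sum>j\<in>A. c j * ncmult r (f j) w)"
  unfolding ncmult_def by (simp add: sum_distrib_left sum.swap[of _ A] mult_ac)

lemma ncmult_lin_left: "ncmult (\<lambda>w. \<Sum>j\<in>A. c j * f j w) r = (\<lambda>w. \<Sum>j\<in>A. c j * ncmult (f j) r w)"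
  unfolding ncmult_def by (simp add: sum_distrib_left sum_distrib_right sum.swap[of _ A] mult_ac)

lemma ceq_sum: "finite A \<Longrightarrow> (\<And>j. j \<in> A \<Longrightarrow> ceq (f j) (g j)) \<Longrightarrow>
   ceq (\<lambda>w. \<Sum>j\<in>A. c j * f j w) (\<lambda>w. \<Sum>j\<in>A. c j * g j w)"
proof -
  assume fin: "finite A" and h: "\<And>j. j \<in> A \<Longrightarrow> ceq (f j) (g j)"
  have "(\<lambda>w. \<Sum>j\<in>A. c j * (f j w - g j w)) \<in> JJ"
    by (rule J_sum[OF fin]) (rule J_scale, use h in \<open>simp add: ceq_def\<close>)
  then show ?thesis unfolding ceq_def by (simp add: right_diff_distrib sum_subtractf)
qed

lemma ceq_ee_ee: "ceq (ncmult (ee k) (ee l)) (ncmult (ee l) (ee k))"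
  unfolding ceq_def ee_def comm_gens_def
  by (rule ncideal.gen) blast

lemma ceq_ee_hh: "ceq (ncmult (ee k) (hh m)) (ncmult (hh m) (ee k) :: ('a::{finite,order}) ncpoly)"
proof (induction m rule: less_induct)
  case (less m)
  show ?case
  proof (cases "m = 0")
    case True
    then show ?thesis by (simp add: hh0 ceq_refl ncmult_cst_left ncmult_cst_right ext)
  next
    case False
    define G :: "nat \<Rightarrow> 'a ncpoly" where "G j = ncmult (ee (Suc j)) (hh (m - Suc j))" for j
    have hm: "hh m = (\<lambda>w. \<Sum>j<m. (-1)^j * G j w)" using hh_rec[of m] False G_def by simp
    have "ceq (ncmult (ee k) (G j)) (ncmult (G j) (ee k))" if "j < m" for j
    proof -
      let ?H = "hh (m - Suc j) :: 'a ncpoly"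
      have "ceq (ncmult (ncmult (ee k) (ee (Suc j))) ?H) (ncmult (ncmult (ee (Suc j)) (ee k)) ?H)"
        by (rule ceq_rmult[OF ceq_ee_ee ncfinite_hh])
      moreover have "ceq (ncmult (ee k) ?H) (ncmult ?H (ee k))"
        by (rule less.IH) (use that False in auto)
      then have "ceq (ncmult (ee (Suc j)) (ncmult (ee k) ?H)) (ncmult (ee (Suc j)) (ncmult ?H (ee k)))"
        by (rule ceq_lmult[OF _ ncfinite_ee])
      ultimately show ?thesis unfolding G_def ncmult_assoc using ceq_trans by blast
    qed
    then have "ceq (\<lambda>w. \<Sum>j<m. (-1)^j * ncmult (ee k) (G j) w) (\<lambda>w. \<Sum>j<m. (-1)^j * ncmult (G j) (ee k) w)"
      by (intro ceq_sum) auto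
    then show ?thesis unfolding hm ncmult_lin_right ncmult_lin_left .
  qed
qed

lemma ceq_hh_hh: "ceq (ncmult (hh a) (hh b)) (ncmult (hh b) (hh a) :: ('a::{finite,order}) ncpoly)"
proof (induction a rule: less_induct)
  case (less a)
  show ?case
  proof (cases "a = 0")
    case True
    then show ?thesis by (simp add: hh0 ceq_refl ncmult_cst_left ncmult_cst_right ext)
  next
    case False
    define G :: "nat \<Rightarrow> 'a ncpoly" where "G j = ncmult (ee (Suc j)) (hh (a - Suc j))" for j
    have ha: "hh a = (\<lambda>w. \<Sum>j<a. (-1)^j * G j w)" using hh_rec[of a] False G_def by simp
    have "ceq (ncmult (G j) (hh b)) (ncmult (hh b) (G j))" if "j < a" for j
    proof -
      let ?H = "hh (a - Suc j) :: 'a ncpoly"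
      have "ceq (ncmult ?H (hh b)) (ncmult (hh b) ?H)"
        by (rule less.IH) (use that False in auto)
      then have "ceq (ncmult (ee (Suc j)) (ncmult ?H (hh b))) (ncmult (ee (Suc j)) (ncmult (hh b) ?H))"
        by (rule ceq_lmult[OF _ ncfinite_ee])
      moreover have "ceq (ncmult (ncmult (ee (Suc j)) (hh b)) ?H) (ncmult (ncmult (hh b) (ee (Suc j))) ?H)"
        by (rule ceq_rmult[OF ceq_ee_hh ncfinite_hh])
      ultimately show ?thesis unfolding G_def ncmult_assoc using ceq_trans by blast
    qed
    then have "ceq (\<lambda>w. \<Sum>j<a. (-1)^j * ncmult (G j) (hh b) w) (\<lambda>w. \<Sum>j<a. (-1)^j * ncmult (hh b) (G j) w)"
      by (intro ceq_sum) auto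
    then show ?thesis unfolding ha ncmult_lin_right ncmult_lin_left .
  qed
qed



primrec hprod :: "nat list \<Rightarrow> ('a::order) ncpoly" where
  "hprod [] = cst 1"
| "hprod (c # cs) = ncmult (hh c) (hprod cs)"

fun blocks_ok :: "nat list \<Rightarrow> ('a::order) list \<Rightarrow> bool" where
  "blocks_ok [] w = (w = [])"
| "blocks_ok (c # cs) w = (c \<le> length w \<and> DesP (take c w) = {} \<and> blocks_ok cs (drop c w))"

lemma hprod_val: "hprod cs w = of_bool (blocks_ok cs w)"
proof (induction cs arbitrary: w)
  case Nil then show ?case by (simp add: cst_def)
next
  case (Cons c cs)
  have "ncmult (hh c) (hprod cs) w = (if c \<le> length w then hh c (take c w) * hprod cs (drop c w) else 0)"
    by (rule ncmult_homog_left) (simp add: hh_def)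
  then show ?case using Cons.IH by (simp add: hh_def)
qed

lemma blocks_ok_length: "blocks_ok cs w \<Longrightarrow> length w = sum_list cs"
proof (induction cs arbitrary: w)
  case (Cons c cs)
  then have "length (drop c w) = sum_list cs" by (intro Cons.IH) simp
  then show ?case using Cons.prems by auto
qed simp

lemma ncfinite_hprod: "ncfinite (hprod cs :: ('a::{finite,order}) ncpoly)"
  by (induction cs) (simp_all add: ncfinite_cst ncfinite_mult ncfinite_hh)

lemma ncmult_one_left: "ncmult (cst 1) p = p"
  by (rule ext) (simp add: ncmult_cst_left)

lemma hprod_filter: "hprod (filter (\<lambda>c. c \<noteq> 0) cs) = hprod cs"
  by (induction cs) (simp_all add: hh0 ncmult_one_left)

lemma ceq_swap: "ceq (hprod (a # b # cs)) (hprod (b # a # cs) :: ('a::{finite,order}) ncpoly)"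
  using ceq_rmult[OF ceq_hh_hh ncfinite_hprod, of a b cs]
  by (simp add: ncmult_assoc)

lemma ceq_move: "ceq (hprod (ys1 @ x # ys2)) (hprod (x # ys1 @ ys2) :: ('a::{finite,order}) ncpoly)"
proof (induction ys1)
  case Nil then show ?case by (simp add: ceq_refl)
next
  case (Cons y ys1)
  have "ceq (hprod (y # ys1 @ x # ys2)) (hprod (y # x # ys1 @ ys2) :: 'a ncpoly)"
    using ceq_lmult[OF Cons.IH ncfinite_hh] by simp
  then show ?case using ceq_swap ceq_trans by (metis append_Cons)
qed

lemma ceq_perm: "mset xs = mset ys \<Longrightarrow> ceq (hprod xs) (hprod ys :: ('a::{finite,order}) ncpoly)"
proof (induction xs arbitrary: ys)
  case Nil then show ?case by (simp add: ceq_refl)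
next
  case (Cons x xs)
  then have "x \<in> set ys" by (metis list.set_intros(1) set_mset_mset)
  then obtain ys1 ys2 where ys: "ys = ys1 @ x # ys2" by (meson split_list)
  then have "mset xs = mset (ys1 @ ys2)" using Cons.prems by simp
  then have "ceq (hprod xs) (hprod (ys1 @ ys2) :: 'a ncpoly)" by (rule Cons.IH)
  then have "ceq (hprod (x # xs)) (hprod (x # ys1 @ ys2) :: 'a ncpoly)"
    using ceq_lmult[OF _ ncfinite_hh] by simp
  then show ?case using ceq_move ceq_sym ceq_trans ys by metis
qed



definition LL :: "(nat \<Rightarrow> nat) \<Rightarrow> nat list \<Rightarrow> nat list" where
  "LL f ls = concat (map (\<lambda>i. replicate (f i) i) ls)"

lemma LL_Cons: "LL f (l # ls) = replicate (f l) l @ LL f ls"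
  by (simp add: LL_def)

lemma set_LL: "set (LL f ls) \<subseteq> set ls"
  by (auto simp: LL_def)

lemma length_LL: "length (LL f ls) = sum_list (map f ls)"
  by (induction ls) (simp_all add: LL_def)

lemma strict_blocks:
  fixes w :: "('a::order) list"
  assumes "sorted_wrt (<) ls" "length w = length (LL f ls)"
  shows "(\<forall>i. Suc i < length w \<longrightarrow> w ! Suc i < w ! i \<longrightarrow> LL f ls ! i < LL f ls ! Suc i)
         \<longleftrightarrow> blocks_ok (map f ls) w"
  using assms
proof (induction ls arbitrary: w)
  case Nil
  then show ?case by (simp add: LL_def)
next
  case (Cons l ls)
  let ?c = "f l" and ?L = "LL f ls" and ?v = "drop (f l) w"
  have L: "LL f (l # ls) = replicate ?c l @ ?L" by (rule LL_Cons)
  have lw: "length w = ?c + length ?L" using Cons.prems L by simp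
  have gt: "\<And>x. x \<in> set ?L \<Longrightarrow> l < x" using Cons.prems(1) set_LL by fastforce
  have lv: "length ?v = length ?L" using lw by simp
  have IH: "(\<forall>i. Suc i < length ?v \<longrightarrow> ?v ! Suc i < ?v ! i \<longrightarrow> ?L ! i < ?L ! Suc i) \<longleftrightarrow> blocks_ok (map f ls) ?v"
    using Cons.IH[of ?v] Cons.prems(1) lv by simp
  have nd: "DesP (take ?c w) = {} \<longleftrightarrow> (\<forall>i. Suc i < ?c \<longrightarrow> \<not> w ! Suc i < w ! i)"
    unfolding DesP_empty_iff using lw by auto
  have Lnth1: "LL f (l # ls) ! i = l" if "i < ?c" for i using that L by (simp add: nth_append)
  have Lnth2: "LL f (l # ls) ! i = ?L ! (i - ?c)" if "\<not> i < ?c" for i using that L by (simp add: nth_append)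
  show ?case
  proof
    assume A: "\<forall>i. Suc i < length w \<longrightarrow> w ! Suc i < w ! i \<longrightarrow> LL f (l # ls) ! i < LL f (l # ls) ! Suc i"
    have "DesP (take ?c w) = {}"
      unfolding nd
    proof (intro allI impI notI)
      fix i assume "Suc i < ?c" "w ! Suc i < w ! i"
      then show False using A[rule_format, of i] lw Lnth1[of i] Lnth1[of "Suc i"] by simp
    qed
    moreover have "blocks_ok (map f ls) ?v"
      unfolding IH[symmetric]
    proof (intro allI impI)
      fix i assume "Suc i < length ?v" "?v ! Suc i < ?v ! i"
      then have "Suc (i + ?c) < length w" "w ! Suc (i + ?c) < w ! (i + ?c)" using lw
        by (simp_all add: add.commute)
      from A[rule_format, OF this] show "?L ! i < ?L ! Suc i"
        using Lnth2[of "i + ?c"] Lnth2[of "Suc (i + ?c)"] by (simp add: Suc_diff_le)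
    qed
    ultimately show "blocks_ok (map f (l # ls)) w" using lw by simp
  next
    assume B: "blocks_ok (map f (l # ls)) w"
    then have nd0: "DesP (take ?c w) = {}" and bv: "blocks_ok (map f ls) ?v" by simp_all
    show "\<forall>i. Suc i < length w \<longrightarrow> w ! Suc i < w ! i \<longrightarrow> LL f (l # ls) ! i < LL f (l # ls) ! Suc i"
    proof (intro allI impI)
      fix i assume i: "Suc i < length w" "w ! Suc i < w ! i"
      consider "Suc i < ?c" | "Suc i = ?c" | "?c \<le> i" by linarith
      then show "LL f (l # ls) ! i < LL f (l # ls) ! Suc i"
      proof cases
        case 1 then show ?thesis using nd0 nd i by blast
      next
        case 2
        then have "?L \<noteq> []" using i lw by auto
        then have "?L ! 0 \<in> set ?L" by simp
        then show ?thesis using 2 Lnth1[of i] Lnth2[of "Suc i"] gt by simp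
      next
        case 3
        define j where "j = i - ?c"
        have ij: "i = j + ?c" using 3 j_def by simp
        have "Suc j < length ?v" "?v ! Suc j < ?v ! j" using i lw ij by (simp_all add: add.commute)
        then have "?L ! j < ?L ! Suc j" using bv IH by blast
        then show ?thesis using Lnth2[of i] Lnth2[of "Suc i"] ij by (simp add: Suc_diff_le)
      qed
    qed
  qed
qed



lemma LL_upt_Suc: "LL f [0..<Suc M] = LL f [0..<M] @ replicate (f M) M"
  by (simp add: LL_def)

lemma count_LL: "count_list (LL f [0..<M]) i = (if i < M then f i else 0)"
proof (induction M)
  case 0 then show ?case by (simp add: LL_def)
next
  case (Suc M)
  have "count_list (replicate n M) i = (if i = M then n else 0)" for n
    by (induction n) auto
  then show ?case using Suc by (simp only: LL_upt_Suc) simp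
qed

lemma sorted_LL: "sorted (LL f [0..<M])"
proof (induction M)
  case 0 then show ?case by (simp add: LL_def)
next
  case (Suc M)
  have "\<forall>x\<in>set (LL f [0..<M]). x \<le> M" using set_LL[of f "[0..<M]"] by auto
  then show ?case using Suc by (simp only: LL_upt_Suc) (auto simp: sorted_append)
qed

lemma Qset_eq:
  assumes "\<forall>i\<ge>M. \<alpha> i = 0"
  defines "L \<equiv> LL \<alpha> [0..<M]"
  shows "{s :: nat list. length s = n
      \<and> (\<forall>j. 1 \<le> j \<and> j < n \<longrightarrow> s ! (j - 1) \<le> s ! j)
      \<and> (\<forall>j\<in>D. s ! (j - 1) < s ! j)
      \<and> (\<forall>i. count_list s i = \<alpha> i)} = (if length L = n \<and> (\<forall>j\<in>D. L ! (j - 1) < L ! j) then {L} else {})"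
proof -
  have cL: "count_list L i = \<alpha> i" for i using assms count_LL[of \<alpha> M i] by auto
  have sL: "sorted L" unfolding L_def by (rule sorted_LL)
  have key: "(length s = n \<and> (\<forall>j. 1 \<le> j \<and> j < n \<longrightarrow> s ! (j - 1) \<le> s ! j) \<and> (\<forall>i. count_list s i = \<alpha> i))
       \<longleftrightarrow> (s = L \<and> length L = n)" for s
  proof
    assume a: "length s = n \<and> (\<forall>j. 1 \<le> j \<and> j < n \<longrightarrow> s ! (j - 1) \<le> s ! j) \<and> (\<forall>i. count_list s i = \<alpha> i)"
    have "sorted s" unfolding sorted_iff_nth_Suc
    proof (intro allI impI)
      fix i assume "Suc i < length s"
      then show "s ! i \<le> s ! Suc i" using a by (metis diff_Suc_1 le_add1 plus_1_eq_Suc)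
    qed
    moreover have "mset s = mset L" by (rule multiset_eqI) (simp add: count_mset a cL)
    ultimately have "sort L = s" by (intro properties_for_sort) simp_all
    then have "s = L" using sL by (simp add: sorted_sort_id)
    then show "s = L \<and> length L = n" using a by simp
  next
    assume "s = L \<and> length L = n"
    moreover have "\<forall>j. 1 \<le> j \<and> j < n \<longrightarrow> L ! (j - 1) \<le> L ! j" if "length L = n"
      using sL that by (auto simp: sorted_iff_nth_mono)
    ultimately show "length s = n \<and> (\<forall>j. 1 \<le> j \<and> j < n \<longrightarrow> s ! (j - 1) \<le> s ! j) \<and> (\<forall>i. count_list s i = \<alpha> i)"
      using cL by simp
  qed
  show ?thesis
  proof (rule set_eqI)
    fix s
    show "s \<in> {s :: nat list. length s = n
      \<and> (\<forall>j. 1 \<le> j \<and> j < n \<longrightarrow> s ! (j - 1) \<le> s ! j)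
      \<and> (\<forall>j\<in>D. s ! (j - 1) < s ! j)
      \<and> (\<forall>i. count_list s i = \<alpha> i)} \<longleftrightarrow> s \<in> (if length L = n \<and> (\<forall>j\<in>D. L ! (j - 1) < L ! j) then {L} else {})"
      using key[of s] by auto
  qed
qed

lemma Qcoeff_eq:
  fixes w :: "('a::order) list"
  assumes "\<forall>i\<ge>M. \<alpha> i = 0"
  shows "Qcoeff (DesP w) (length w) \<alpha> = of_bool (blocks_ok (map \<alpha> [0..<M]) w)"
proof -
  let ?L = "LL \<alpha> [0..<M]"
  have Q: "Qcoeff (DesP w) (length w) \<alpha> = of_bool (length ?L = length w \<and> (\<forall>j\<in>DesP w. ?L ! (j - 1) < ?L ! j))"
    unfolding Qcoeff_def Qset_eq[OF assms] by simp
  have D: "(\<forall>j\<in>DesP w. ?L ! (j - 1) < ?L ! j) \<longleftrightarrow> (\<forall>i. Suc i < length w \<longrightarrow> w ! Suc i < w ! i \<longrightarrow> ?L ! i < ?L ! Suc i)"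
    unfolding DesP_def
  proof safe
    fix i assume "\<forall>j\<in>{i. 1 \<le> i \<and> i < length w \<and> w ! i < w ! (i - 1)}. ?L ! (j - 1) < ?L ! j"
      "Suc i < length w" "w ! Suc i < w ! i"
    then show "?L ! i < ?L ! Suc i" by fastforce
  next
    fix j assume "\<forall>i. Suc i < length w \<longrightarrow> w ! Suc i < w ! i \<longrightarrow> ?L ! i < ?L ! Suc i"
      "1 \<le> j" "j < length w" "w ! j < w ! (j - 1)"
    then show "?L ! (j - 1) < ?L ! j" by (metis Suc_diff_1 less_eq_Suc_le One_nat_def)
  qed
  show ?thesis
  proof (cases "length ?L = length w")
    case True
    then show ?thesis using Q D strict_blocks[of "[0..<M]" w \<alpha>] by simp
  next
    case False
    have "\<not> blocks_ok (map \<alpha> [0..<M]) w"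
      using False blocks_ok_length[of "map \<alpha> [0..<M]" w] length_LL[of \<alpha> "[0..<M]"] by auto
    then show ?thesis using Q False by simp
  qed
qed

lemma Fcoeff_hprod:
  fixes \<gamma> :: "('a::order) ncpoly"
  assumes "\<forall>i\<ge>M. \<alpha> i = 0"
  shows "Fcoeff \<gamma> \<alpha> = pairing (hprod (map \<alpha> [0..<M])) \<gamma>"
  unfolding Fcoeff_def pairing_def
  by (intro sum.cong refl) (simp add: Qcoeff_eq[OF assms] hprod_val)

lemma Fcoeff_inf:
  assumes "infinite {i. \<alpha> i \<noteq> 0}"
  shows "Fcoeff \<gamma> \<alpha> = 0"
proof -
  have "Qcoeff D n \<alpha> = 0" for D n
  proof -
    have "{s :: nat list. length s = n
      \<and> (\<forall>j. 1 \<le> j \<and> j < n \<longrightarrow> s ! (j - 1) \<le> s ! j)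
      \<and> (\<forall>j\<in>D. s ! (j - 1) < s ! j)
      \<and> (\<forall>i. count_list s i = \<alpha> i)} = {}"
    proof (rule equals0I)
      fix s assume "s \<in> {s :: nat list. length s = n
      \<and> (\<forall>j. 1 \<le> j \<and> j < n \<longrightarrow> s ! (j - 1) \<le> s ! j)
      \<and> (\<forall>j\<in>D. s ! (j - 1) < s ! j)
      \<and> (\<forall>i. count_list s i = \<alpha> i)}"
      then have s: "\<forall>i. count_list s i = \<alpha> i" by blast
      have "{i. \<alpha> i \<noteq> 0} \<subseteq> set s" using s count_notin by fastforce
      then show False using assms finite_subset by blast
    qed
    then show ?thesis unfolding Qcoeff_def by (simp only: card.empty)
  qed
  then show ?thesis by (simp add: Fcoeff_def)
qed

lemma mset_nonzero:
  assumes "\<forall>i\<ge>M. f i = 0"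
  shows "mset (filter (\<lambda>c. c \<noteq> 0) (map f [0..<M])) = image_mset f (mset_set {i. f i \<noteq> 0})"
proof -
  have "{i \<in> {0..<M}. f i \<noteq> 0} = {i. f i \<noteq> 0}" using assms by (auto simp: not_less[symmetric])
  then show ?thesis by (simp add: filter_mset_image_mset)
qed

theorem mainTheorem4:
  fixes \<gamma> :: "('a::{finite,order}) list \<Rightarrow> int"
  assumes "ncfinite \<gamma>"
    and "\<gamma> \<in> ncperp (ncideal comm_gens)"
  shows "symmetric_series (Fcoeff \<gamma>)"
  unfolding symmetric_series_def
proof (intro allI impI)
  fix \<sigma> :: "nat \<Rightarrow> nat" and \<alpha> :: "nat \<Rightarrow> nat"
  assume b: "bij \<sigma>"
  let ?S = "{i. \<alpha> i \<noteq> 0}"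
  have S2: "{i. (\<alpha> \<circ> \<sigma>) i \<noteq> 0} = \<sigma> -` ?S" by auto
  have img: "\<sigma> ` (\<sigma> -` ?S) = ?S" by (rule surj_image_vimage_eq[OF bij_is_surj[OF b]])
  show "Fcoeff \<gamma> (\<alpha> \<circ> \<sigma>) = Fcoeff \<gamma> \<alpha>"
  proof (cases "finite ?S")
    case False
    have "infinite (\<sigma> -` ?S)" using False img by (metis finite_imageI)
    then show ?thesis using False Fcoeff_inf S2 by metis
  next
    case True
    have fin2: "finite (\<sigma> -` ?S)" by (rule finite_vimageI[OF True bij_is_inj[OF b]])
    obtain M1 where M1: "?S \<subseteq> {..<M1}" using True by (auto simp: finite_nat_set_iff_bounded)
    obtain M2 where M2: "\<sigma> -` ?S \<subseteq> {..<M2}" using fin2 by (auto simp: finite_nat_set_iff_bounded)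
    define M where "M = max M1 M2"
    have z1: "\<forall>i\<ge>M. \<alpha> i = 0" using M1 unfolding M_def by force
    have z2: "\<forall>i\<ge>M. (\<alpha> \<circ> \<sigma>) i = 0" using M2 unfolding M_def by force
    have "mset (filter (\<lambda>c. c \<noteq> 0) (map (\<alpha> \<circ> \<sigma>) [0..<M])) = image_mset (\<alpha> \<circ> \<sigma>) (mset_set (\<sigma> -` ?S))"
      using mset_nonzero[OF z2] by (simp only: S2)
    also have "\<dots> = image_mset \<alpha> (image_mset \<sigma> (mset_set (\<sigma> -` ?S)))"
      by (simp add: image_mset.compositionality)
    also have "\<dots> = image_mset \<alpha> (mset_set ?S)"
    proof -
      have "image_mset \<sigma> (mset_set (\<sigma> -` ?S)) = mset_set (\<sigma> ` (\<sigma> -` ?S))"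
        by (rule image_mset_mset_set) (use b bij_is_inj inj_on_subset in blast)
      then show ?thesis by (simp only: img)
    qed
    also have "\<dots> = mset (filter (\<lambda>c. c \<noteq> 0) (map \<alpha> [0..<M]))"
      using mset_nonzero[OF z1] by simp
    finally have "ceq (hprod (filter (\<lambda>c. c \<noteq> 0) (map (\<alpha> \<circ> \<sigma>) [0..<M])))
                      (hprod (filter (\<lambda>c. c \<noteq> 0) (map \<alpha> [0..<M])) :: 'a ncpoly)"
      by (rule ceq_perm)
    then have "pairing (hprod (map (\<alpha> \<circ> \<sigma>) [0..<M])) \<gamma> = pairing (hprod (map \<alpha> [0..<M])) \<gamma>"
      using ceq_pairing[OF _ assms(2)] by (simp only: hprod_filter)
    then show ?thesis by (simp only: Fcoeff_hprod[OF z1] Fcoeff_hprod[OF z2])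
  qed
qed

end
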